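(* Let $\mathcal V$ be braided monoidal closed, $H$ a Hopf $\mathcal V$-category with invertible antipode $s$, and $t$ a non-singular left integral family for $H$. Let $x\in X$ and let $f_x,g_x\colon H_{x,x}\to I$ be morphisms such that $$(1\otimes f_x)\circ\delta_{xx}\circ t^{xx}=j_x\quad\text{and}\quad (g_x\otimes1)\circ\delta_{xx}\circ t^{xx}=j_x .$$ Then $g_x=f_x\circ s_{xx}^{-1}$. In particular, if $\bar p_x$ is a right inverse of $p_{xx}$ and $\bar q_x$ a right inverse of $q_{xx}$, then $$\mathrm{ev}_{xx}\circ(\bar p_x\otimes1)\circ(j_x\otimes1)=\mathrm{ev}_{xx}\circ\sigma_{H_{x,x},H^*_{x,x}}\circ(1\otimes\bar q_x)\circ(1\otimes j_x)\circ s_{xx}^{-1}\colon H_{x,x}\to I.$$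
   Context: $\mathcal V$ is a braided monoidal category with tensor $\otimes$, unit $I$, braiding $\sigma$ (unit constraints suppressed), which is closed; $A^*_{x,y}:=[A_{x,y},I]$ with evaluation $\mathrm{ev}_{xy}\colon A^*_{x,y}\otimes A_{x,y}\to I$. A $\mathcal V$-category $A$ with object set $X$ has objects $A_{x,y}$, compositions $m_{xyz}\colon A_{x,y}\otimes A_{y,z}\to A_{x,z}$, units $j_x\colon I\to A_{x,x}$, associative and unital. Semi-Hopf: each $A_{x,y}$ is a comonoid $(\delta_{xy},\epsilon_{xy})$ and all $m_{xyz},j_x$ are comonoid morphisms. Hopf: there are $s_{xy}\colon A_{x,y}\to A_{y,x}$ with $m_{xyx}\circ(1\otimes s_{xy})\circ\delta_{xy}=j_x\circ\epsilon_{xy}$ and $m_{yxy}\circ(s_{xy}\otimes1)\circ\delta_{xy}=j_y\circ\epsilon_{xy}$; invertible antipode means each $s_{xy}$ is an isomorphism. Left integral family: $t^{xy}\colon I\to A_{x,y}$ with $m_{zxy}\circ(1\otimes t^{xy})=t^{zy}\circ\epsilon_{zx}$ for all $x,y,z$. For such $t$: $p_{xy}:=(\mathrm{ev}_{xy}\otimes1)\circ(1\otimes\delta_{xy})\circ(1\otimes t^{xy})\colon A^*_{x,y}\to A_{x,y}$ and $q_{xy}:=(1\otimes\mathrm{ev}_{xy})\circ(1\otimes\sigma_{A_{x,y},A^*_{x,y}})\circ(\delta_{xy}\otimes1)\circ(t^{xy}\otimes1)\colon A^*_{x,y}\to A_{x,y}$. $t$ is non-singular if all $p_{xx}$ and all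 $q_{xx}$ ($x\in X$) are split epimorphisms. *)

theory Defs
  imports Main
begin

text \<open>A monoidal category presented by explicit data: objects of type 'o, morphisms of
type 'm (every element of 'm is a morphism with domain dm and codomain cd),
composition cp g f = g o f, identities, tensor on objects (ot) and morphisms (tm),
unit object U, associator aso (inverse asoi), left/right unitors lu/ru (inverses lui/rui),
braiding br (inverse bri), internal hom ih with evaluation ev : ih a b (x) a -> b.\<close>

record ('o, 'm) bmcc =
  dm :: "'m \<Rightarrow> 'o"
  cd :: "'m \<Rightarrow> 'o"
  cp :: "'m \<Rightarrow> 'm \<Rightarrow> 'm"
  ident :: "'o \<Rightarrow> 'm"
  ot :: "'o \<Rightarrow> 'o \<Rightarrow> 'o"
  tm :: "'m \<Rightarrow> 'm \<Rightarrow> 'm"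
  U :: "'o"
  aso :: "'o \<Rightarrow> 'o \<Rightarrow> 'o \<Rightarrow> 'm"
  asoi :: "'o \<Rightarrow> 'o \<Rightarrow> 'o \<Rightarrow> 'm"
  lu :: "'o \<Rightarrow> 'm"
  lui :: "'o \<Rightarrow> 'm"
  ru :: "'o \<Rightarrow> 'm"
  rui :: "'o \<Rightarrow> 'm"
  br :: "'o \<Rightarrow> 'o \<Rightarrow> 'm"
  bri :: "'o \<Rightarrow> 'o \<Rightarrow> 'm"
  ih :: "'o \<Rightarrow> 'o \<Rightarrow> 'o"
  ev :: "'o \<Rightarrow> 'o \<Rightarrow> 'm"

definition hom :: "('o,'m) bmcc \<Rightarrow> 'm \<Rightarrow> 'o \<Rightarrow> 'o \<Rightarrow> bool" where
  "hom C f a b \<longleftrightarrow> dm C f = a \<and> cd C f = b"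

definition is_inverse :: "('o,'m) bmcc \<Rightarrow> 'm \<Rightarrow> 'm \<Rightarrow> 'o \<Rightarrow> 'o \<Rightarrow> bool" where
  "is_inverse C f g a b \<longleftrightarrow> hom C f a b \<and> hom C g b a \<and>
     cp C g f = ident C a \<and> cp C f g = ident C b"

definition category :: "('o,'m) bmcc \<Rightarrow> bool" where
  "category C \<longleftrightarrow>
    (\<forall>a. hom C (ident C a) a a) \<and>
    (\<forall>f g. cd C f = dm C g \<longrightarrow> hom C (cp C g f) (dm C f) (cd C g)) \<and>
    (\<forall>f. cp C f (ident C (dm C f)) = f \<and> cp C (ident C (cd C f)) f = f) \<and>
    (\<forall>f g h. cd C f = dm C g \<and> cd C g = dm C h \<longrightarrow>
        cp C h (cp C g f) = cp C (cp C h g) f)"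

definition monoidal :: "('o,'m) bmcc \<Rightarrow> bool" where
  "monoidal C \<longleftrightarrow> category C \<and>
    (\<forall>f g. hom C (tm C f g) (ot C (dm C f) (dm C g)) (ot C (cd C f) (cd C g))) \<and>
    (\<forall>a b. tm C (ident C a) (ident C b) = ident C (ot C a b)) \<and>
    (\<forall>f g f' g'. cd C f = dm C g \<and> cd C f' = dm C g' \<longrightarrow>
        tm C (cp C g f) (cp C g' f') = cp C (tm C g g') (tm C f f')) \<and>
    (\<forall>a b c. is_inverse C (aso C a b c) (asoi C a b c)
                (ot C (ot C a b) c) (ot C a (ot C b c))) \<and>
    (\<forall>a. is_inverse C (lu C a) (lui C a) (ot C (U C) a) a) \<and>
    (\<forall>a. is_inverse C (ru C a) (rui C a) (ot C a (U C)) a) \<and>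
    (\<forall>f g h. cp C (aso C (cd C f) (cd C g) (cd C h)) (tm C (tm C f g) h) =
             cp C (tm C f (tm C g h)) (aso C (dm C f) (dm C g) (dm C h))) \<and>
    (\<forall>f. cp C (lu C (cd C f)) (tm C (ident C (U C)) f) = cp C f (lu C (dm C f))) \<and>
    (\<forall>f. cp C (ru C (cd C f)) (tm C f (ident C (U C))) = cp C f (ru C (dm C f))) \<and>
    (\<forall>a b c d.
       cp C (aso C a b (ot C c d)) (aso C (ot C a b) c d) =
       cp C (tm C (ident C a) (aso C b c d))
         (cp C (aso C a (ot C b c) d) (tm C (aso C a b c) (ident C d)))) \<and>
    (\<forall>a b. cp C (tm C (ident C a) (lu C b)) (aso C a (U C) b) = tm C (ru C a) (ident C b))"

definition braided :: "('o,'m) bmcc \<Rightarrow> bool" where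
  "braided C \<longleftrightarrow> monoidal C \<and>
    (\<forall>a b. is_inverse C (br C a b) (bri C a b) (ot C a b) (ot C b a)) \<and>
    (\<forall>f g. cp C (br C (cd C f) (cd C g)) (tm C f g) =
           cp C (tm C g f) (br C (dm C f) (dm C g))) \<and>
    (\<forall>a b c.
       cp C (aso C b c a) (cp C (br C a (ot C b c)) (aso C a b c)) =
       cp C (tm C (ident C b) (br C a c))
         (cp C (aso C b a c) (tm C (br C a b) (ident C c)))) \<and>
    (\<forall>a b c.
       cp C (asoi C c a b) (cp C (br C (ot C a b) c) (asoi C a b c)) =
       cp C (tm C (br C a c) (ident C b))
         (cp C (asoi C a c b) (tm C (ident C a) (br C b c))))"

definition closed :: "('o,'m) bmcc \<Rightarrow> bool" where
  "closed C \<longleftrightarrow>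
    (\<forall>a b. hom C (ev C a b) (ot C (ih C a b) a) b \<and>
       (\<forall>c f. hom C f (ot C c a) b \<longrightarrow>
          (\<exists>!g. hom C g c (ih C a b) \<and> cp C (ev C a b) (tm C g (ident C a)) = f)))"

definition comonoid :: "('o,'m) bmcc \<Rightarrow> 'o \<Rightarrow> 'm \<Rightarrow> 'm \<Rightarrow> bool" where
  "comonoid C a d e \<longleftrightarrow> hom C d a (ot C a a) \<and> hom C e a (U C) \<and>
    cp C (aso C a a a) (cp C (tm C d (ident C a)) d) = cp C (tm C (ident C a) d) d \<and>
    cp C (lu C a) (cp C (tm C e (ident C a)) d) = ident C a \<and>
    cp C (ru C a) (cp C (tm C (ident C a) e) d) = ident C a"

text \<open>middle-four interchange (a(x)a)(x)(b(x)b) -> (a(x)b)(x)(a(x)b)\<close>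
definition mid4 :: "('o,'m) bmcc \<Rightarrow> 'o \<Rightarrow> 'o \<Rightarrow> 'm" where
  "mid4 C a b =
    cp C (asoi C a b (ot C a b))
     (cp C (tm C (ident C a) (aso C b a b))
      (cp C (tm C (ident C a) (tm C (br C a b) (ident C b)))
       (cp C (tm C (ident C a) (asoi C a b b))
             (aso C a a (ot C b b)))))"

definition tens_comult :: "('o,'m) bmcc \<Rightarrow> 'o \<Rightarrow> 'o \<Rightarrow> 'm \<Rightarrow> 'm \<Rightarrow> 'm" where
  "tens_comult C a b da db = cp C (mid4 C a b) (tm C da db)"

definition tens_counit :: "('o,'m) bmcc \<Rightarrow> 'm \<Rightarrow> 'm \<Rightarrow> 'm" where
  "tens_counit C ea eb = cp C (lu C (U C)) (tm C ea eb)"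

definition comonoid_mor :: "('o,'m) bmcc \<Rightarrow> 'm \<Rightarrow> 'o \<Rightarrow> 'm \<Rightarrow> 'm \<Rightarrow> 'o \<Rightarrow> 'm \<Rightarrow> 'm \<Rightarrow> bool" where
  "comonoid_mor C f a da ea b db eb \<longleftrightarrow> hom C f a b \<and>
     cp C db f = cp C (tm C f f) da \<and> cp C eb f = ea"

text \<open>V-categories with object set the type 'x.\<close>

definition vcat :: "('o,'m) bmcc \<Rightarrow> ('x \<Rightarrow> 'x \<Rightarrow> 'o) \<Rightarrow> ('x \<Rightarrow> 'x \<Rightarrow> 'x \<Rightarrow> 'm) \<Rightarrow> ('x \<Rightarrow> 'm) \<Rightarrow> bool" where
  "vcat C A m j \<longleftrightarrow>
    (\<forall>x y z. hom C (m x y z) (ot C (A x y) (A y z)) (A x z)) \<and>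
    (\<forall>x. hom C (j x) (U C) (A x x)) \<and>
    (\<forall>w x y z. cp C (m w y z) (tm C (m w x y) (ident C (A y z))) =
        cp C (m w x z) (cp C (tm C (ident C (A w x)) (m x y z)) (aso C (A w x) (A x y) (A y z)))) \<and>
    (\<forall>x y. cp C (m x x y) (tm C (j x) (ident C (A x y))) = lu C (A x y)) \<and>
    (\<forall>x y. cp C (m x y y) (tm C (ident C (A x y)) (j y)) = ru C (A x y))"

definition semi_hopf :: "('o,'m) bmcc \<Rightarrow> ('x \<Rightarrow> 'x \<Rightarrow> 'o) \<Rightarrow> ('x \<Rightarrow> 'x \<Rightarrow> 'x \<Rightarrow> 'm) \<Rightarrow> ('x \<Rightarrow> 'm)
    \<Rightarrow> ('x \<Rightarrow> 'x \<Rightarrow> 'm) \<Rightarrow> ('x \<Rightarrow> 'x \<Rightarrow> 'm) \<Rightarrow> bool" where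
  "semi_hopf C A m j dl ep \<longleftrightarrow> vcat C A m j \<and>
    (\<forall>x y. comonoid C (A x y) (dl x y) (ep x y)) \<and>
    (\<forall>x y z. comonoid_mor C (m x y z)
        (ot C (A x y) (A y z)) (tens_comult C (A x y) (A y z) (dl x y) (dl y z))
           (tens_counit C (ep x y) (ep y z))
        (A x z) (dl x z) (ep x z)) \<and>
    (\<forall>x. comonoid_mor C (j x) (U C) (lui C (U C)) (ident C (U C)) (A x x) (dl x x) (ep x x))"

definition hopf :: "('o,'m) bmcc \<Rightarrow> ('x \<Rightarrow> 'x \<Rightarrow> 'o) \<Rightarrow> ('x \<Rightarrow> 'x \<Rightarrow> 'x \<Rightarrow> 'm) \<Rightarrow> ('x \<Rightarrow> 'm)
    \<Rightarrow> ('x \<Rightarrow> 'x \<Rightarrow> 'm) \<Rightarrow> ('x \<Rightarrow> 'x \<Rightarrow> 'm) \<Rightarrow> ('x \<Rightarrow> 'x \<Rightarrow> 'm) \<Rightarrow> bool" where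
  "hopf C A m j dl ep s \<longleftrightarrow> semi_hopf C A m j dl ep \<and>
    (\<forall>x y. hom C (s x y) (A x y) (A y x)) \<and>
    (\<forall>x y. cp C (m x y x) (cp C (tm C (ident C (A x y)) (s x y)) (dl x y)) = cp C (j x) (ep x y)) \<and>
    (\<forall>x y. cp C (m y x y) (cp C (tm C (s x y) (ident C (A x y))) (dl x y)) = cp C (j y) (ep x y))"

definition left_integral_family :: "('o,'m) bmcc \<Rightarrow> ('x \<Rightarrow> 'x \<Rightarrow> 'o) \<Rightarrow> ('x \<Rightarrow> 'x \<Rightarrow> 'x \<Rightarrow> 'm)
    \<Rightarrow> ('x \<Rightarrow> 'x \<Rightarrow> 'm) \<Rightarrow> ('x \<Rightarrow> 'x \<Rightarrow> 'm) \<Rightarrow> bool" where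
  "left_integral_family C A m ep t \<longleftrightarrow>
    (\<forall>x y. hom C (t x y) (U C) (A x y)) \<and>
    (\<forall>x y z. cp C (m z x y) (cp C (tm C (ident C (A z x)) (t x y)) (rui C (A z x))) =
             cp C (t z y) (ep z x))"

definition dual :: "('o,'m) bmcc \<Rightarrow> 'o \<Rightarrow> 'o" where
  "dual C a = ih C a (U C)"

definition pmap :: "('o,'m) bmcc \<Rightarrow> ('x \<Rightarrow> 'x \<Rightarrow> 'o) \<Rightarrow> ('x \<Rightarrow> 'x \<Rightarrow> 'm) \<Rightarrow> ('x \<Rightarrow> 'x \<Rightarrow> 'm)
    \<Rightarrow> 'x \<Rightarrow> 'x \<Rightarrow> 'm" where
  "pmap C A dl t x y =
    (let a = A x y; as = dual C a in
     cp C (lu C a)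
      (cp C (tm C (ev C a (U C)) (ident C a))
       (cp C (asoi C as a a)
        (cp C (tm C (ident C as) (dl x y))
         (cp C (tm C (ident C as) (t x y)) (rui C as))))))"

definition qmap :: "('o,'m) bmcc \<Rightarrow> ('x \<Rightarrow> 'x \<Rightarrow> 'o) \<Rightarrow> ('x \<Rightarrow> 'x \<Rightarrow> 'm) \<Rightarrow> ('x \<Rightarrow> 'x \<Rightarrow> 'm)
    \<Rightarrow> 'x \<Rightarrow> 'x \<Rightarrow> 'm" where
  "qmap C A dl t x y =
    (let a = A x y; as = dual C a in
     cp C (ru C a)
      (cp C (tm C (ident C a) (ev C a (U C)))
       (cp C (tm C (ident C a) (br C a as))
        (cp C (aso C a a as)
         (cp C (tm C (dl x y) (ident C as))
          (cp C (tm C (t x y) (ident C as)) (lui C as)))))))"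

definition right_inverse :: "('o,'m) bmcc \<Rightarrow> 'm \<Rightarrow> 'm \<Rightarrow> bool" where
  "right_inverse C r f \<longleftrightarrow> hom C r (cd C f) (dm C f) \<and> cp C f r = ident C (cd C f)"

definition split_epi :: "('o,'m) bmcc \<Rightarrow> 'm \<Rightarrow> bool" where
  "split_epi C f \<longleftrightarrow> (\<exists>r. right_inverse C r f)"

definition nonsingular :: "('o,'m) bmcc \<Rightarrow> ('x \<Rightarrow> 'x \<Rightarrow> 'o) \<Rightarrow> ('x \<Rightarrow> 'x \<Rightarrow> 'm)
    \<Rightarrow> ('x \<Rightarrow> 'x \<Rightarrow> 'm) \<Rightarrow> bool" where
  "nonsingular C A dl t \<longleftrightarrow>
    (\<forall>x. split_epi C (pmap C A dl t x x) \<and> split_epi C (qmap C A dl t x x))"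

end

theory Submission imports Defs begin
locale BMC = fixes C :: "('o,'m) bmcc" assumes brd: "braided C"
begin
abbreviation cmp (infixr "\<bullet>" 55) where "g \<bullet> f \<equiv> cp C g f"
abbreviation tns (infixr "\<otimes>" 60) where "f \<otimes> g \<equiv> tm C f g"
abbreviation otn (infixr "\<odot>" 60) where "a \<odot> b \<equiv> ot C a b"
abbreviation "idm \<equiv> ident C"
abbreviation "UU \<equiv> U C"
abbreviation "DM \<equiv> dm C"
abbreviation "CD \<equiv> cd C"

lemma mon: "monoidal C" using brd braided_def by auto
lemma cat: "category C" using mon monoidal_def by auto

lemma id_dm[simp]: "DM (idm a) = a" and id_cd[simp]: "CD (idm a) = a"
  using cat unfolding category_def hom_def by auto
lemma cp_dm[simp]: "CD f = DM g \<Longrightarrow> DM (g \<bullet> f) = DM f"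
  and cp_cd[simp]: "CD f = DM g \<Longrightarrow> CD (g \<bullet> f) = CD g"
  using cat unfolding category_def hom_def by auto
lemma idl[simp]: "CD f = b \<Longrightarrow> idm b \<bullet> f = f"
  and idr[simp]: "DM f = a \<Longrightarrow> f \<bullet> idm a = f"
  using cat unfolding category_def by auto
lemma assoc[simp]: "CD f = DM g \<Longrightarrow> CD g = DM h \<Longrightarrow> (h \<bullet> g) \<bullet> f = h \<bullet> (g \<bullet> f)"
  using cat unfolding category_def by metis
lemma tm_dm[simp]: "DM (f \<otimes> g) = DM f \<odot> DM g" and tm_cd[simp]: "CD (f \<otimes> g) = CD f \<odot> CD g"
  using mon unfolding monoidal_def hom_def by auto
lemma tm_id[simp]: "idm a \<otimes> idm b = idm (a \<odot> b)"
  using mon unfolding monoidal_def by auto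
lemma interchange: "CD f = DM g \<Longrightarrow> CD f' = DM g' \<Longrightarrow> (g \<bullet> f) \<otimes> (g' \<bullet> f') = (g \<otimes> g') \<bullet> (f \<otimes> f')"
  using mon unfolding monoidal_def by auto

lemma aso_prop: "DM (aso C a b c) = (a \<odot> b) \<odot> c" "CD (aso C a b c) = a \<odot> (b \<odot> c)"
  "DM (asoi C a b c) = a \<odot> (b \<odot> c)" "CD (asoi C a b c) = (a \<odot> b) \<odot> c"
  "asoi C a b c \<bullet> aso C a b c = idm ((a \<odot> b) \<odot> c)" "aso C a b c \<bullet> asoi C a b c = idm (a \<odot> (b \<odot> c))"
  using mon unfolding monoidal_def is_inverse_def hom_def by auto
lemma lu_prop: "DM (lu C a) = UU \<odot> a" "CD (lu C a) = a" "DM (lui C a) = a" "CD (lui C a) = UU \<odot> a"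
  "lui C a \<bullet> lu C a = idm (UU \<odot> a)" "lu C a \<bullet> lui C a = idm a"
  using mon unfolding monoidal_def is_inverse_def hom_def by auto
lemma ru_prop: "DM (ru C a) = a \<odot> UU" "CD (ru C a) = a" "DM (rui C a) = a" "CD (rui C a) = a \<odot> UU"
  "rui C a \<bullet> ru C a = idm (a \<odot> UU)" "ru C a \<bullet> rui C a = idm a"
  using mon unfolding monoidal_def is_inverse_def hom_def by auto
lemma br_prop: "DM (br C a b) = a \<odot> b" "CD (br C a b) = b \<odot> a" "DM (bri C a b) = b \<odot> a" "CD (bri C a b) = a \<odot> b"
  "bri C a b \<bullet> br C a b = idm (a \<odot> b)" "br C a b \<bullet> bri C a b = idm (b \<odot> a)"
  using brd unfolding braided_def is_inverse_def hom_def by auto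
lemmas obj_simps[simp] = aso_prop(1-4) lu_prop(1-4) ru_prop(1-4) br_prop(1-4)

lemma inv_tail[simp]:
  "CD r = a \<odot> (b \<odot> c) \<Longrightarrow> aso C a b c \<bullet> (asoi C a b c \<bullet> r) = r"
  "CD r = (a \<odot> b) \<odot> c \<Longrightarrow> asoi C a b c \<bullet> (aso C a b c \<bullet> r) = r"
  "CD r = a \<Longrightarrow> lu C a \<bullet> (lui C a \<bullet> r) = r"
  "CD r = UU \<odot> a \<Longrightarrow> lui C a \<bullet> (lu C a \<bullet> r) = r"
  "CD r = a \<Longrightarrow> ru C a \<bullet> (rui C a \<bullet> r) = r"
  "CD r = a \<odot> UU \<Longrightarrow> rui C a \<bullet> (ru C a \<bullet> r) = r"
  "CD r = a \<odot> b \<Longrightarrow> bri C a b \<bullet> (br C a b \<bullet> r) = r"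
  "CD r = b \<odot> a \<Longrightarrow> br C a b \<bullet> (bri C a b \<bullet> r) = r"
  by (simp_all flip: assoc add: aso_prop lu_prop ru_prop br_prop)
lemma inv_simp[simp]:
  "aso C a b c \<bullet> asoi C a b c = idm (a \<odot> (b \<odot> c))"
  "asoi C a b c \<bullet> aso C a b c = idm ((a \<odot> b) \<odot> c)"
  "lui C a \<bullet> lu C a = idm (UU \<odot> a)" "lu C a \<bullet> lui C a = idm a"
  "rui C a \<bullet> ru C a = idm (a \<odot> UU)" "ru C a \<bullet> rui C a = idm a"
  "bri C a b \<bullet> br C a b = idm (a \<odot> b)" "br C a b \<bullet> bri C a b = idm (b \<odot> a)"
  by (simp_all add: aso_prop lu_prop ru_prop br_prop)

lemma aso_nat: "aso C (CD f) (CD g) (CD h) \<bullet> ((f \<otimes> g) \<otimes> h) = (f \<otimes> (g \<otimes> h)) \<bullet> aso C (DM f) (DM g) (DM h)"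
  using mon unfolding monoidal_def by auto
lemma lu_nat: "lu C (CD f) \<bullet> (idm UU \<otimes> f) = f \<bullet> lu C (DM f)"
  using mon unfolding monoidal_def by auto
lemma ru_nat: "ru C (CD f) \<bullet> (f \<otimes> idm UU) = f \<bullet> ru C (DM f)"
  using mon unfolding monoidal_def by auto
lemma pentagon: "aso C a b (c \<odot> d) \<bullet> aso C (a \<odot> b) c d =
       (idm a \<otimes> aso C b c d) \<bullet> (aso C a (b \<odot> c) d \<bullet> (aso C a b c \<otimes> idm d))"
  using mon unfolding monoidal_def by auto
lemma triangle: "(idm a \<otimes> lu C b) \<bullet> aso C a UU b = ru C a \<otimes> idm b"
  using mon unfolding monoidal_def by auto
lemma br_nat: "br C (CD f) (CD g) \<bullet> (f \<otimes> g) = (g \<otimes> f) \<bullet> br C (DM f) (DM g)"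
  using brd unfolding braided_def by auto
lemma hex1: "aso C b c a \<bullet> (br C a (b \<odot> c) \<bullet> aso C a b c) =
       (idm b \<otimes> br C a c) \<bullet> (aso C b a c \<bullet> (br C a b \<otimes> idm c))"
  using brd unfolding braided_def by auto

lemma tailify: "g \<bullet> f = k \<Longrightarrow> CD r = DM f \<Longrightarrow> CD f = DM g \<Longrightarrow> g \<bullet> (f \<bullet> r) = k \<bullet> r"
  by (metis assoc)

lemma tm_cp1: "CD f = DM g \<Longrightarrow> (g \<bullet> f) \<otimes> idm c = (g \<otimes> idm c) \<bullet> (f \<otimes> idm c)"
  by (metis id_cd id_dm idl interchange)
lemma tm_cp2: "CD f = DM g \<Longrightarrow> idm c \<otimes> (g \<bullet> f) = (idm c \<otimes> g) \<bullet> (idm c \<otimes> f)"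
  by (metis id_cd id_dm idl interchange)
lemma tm_split: "f \<otimes> g = (f \<otimes> idm (CD g)) \<bullet> (idm (DM f) \<otimes> g)"
  by (metis id_cd id_dm idl idr interchange)
lemma tm_split': "f \<otimes> g = (idm (CD f) \<otimes> g) \<bullet> (f \<otimes> idm (DM g))"
  by (metis id_cd id_dm idl idr interchange)

lemma merge: "CD f = DM g \<Longrightarrow> CD f' = DM g' \<Longrightarrow> (g \<otimes> g') \<bullet> (f \<otimes> f') = (g \<bullet> f) \<otimes> (g' \<bullet> f')"
  "CD f = DM g \<Longrightarrow> CD f' = DM g' \<Longrightarrow> CD r = DM f \<odot> DM f' \<Longrightarrow> (g \<otimes> g') \<bullet> ((f \<otimes> f') \<bullet> r) = ((g \<bullet> f) \<otimes> (g' \<bullet> f')) \<bullet> r"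
  by (simp_all add: interchange flip: assoc)

lemma cancelL: assumes "idm UU \<otimes> f = idm UU \<otimes> g" "DM f = DM g" "CD f = CD g" shows "f = g"
proof -
  have "f = (f \<bullet> lu C (DM f)) \<bullet> lui C (DM f)" by simp
  also have "\<dots> = (lu C (CD f) \<bullet> (idm UU \<otimes> f)) \<bullet> lui C (DM f)" by (simp only: lu_nat)
  also have "\<dots> = (lu C (CD g) \<bullet> (idm UU \<otimes> g)) \<bullet> lui C (DM g)" using assms by simp
  also have "\<dots> = (g \<bullet> lu C (DM g)) \<bullet> lui C (DM g)" by (simp only: lu_nat)
  also have "\<dots> = g" by simp
  finally show ?thesis .
qed
lemma cancelR: assumes "f \<otimes> idm UU = g \<otimes> idm UU" "DM f = DM g" "CD f = CD g" shows "f = g"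
proof -
  have "f = (f \<bullet> ru C (DM f)) \<bullet> rui C (DM f)" by simp
  also have "\<dots> = (ru C (CD f) \<bullet> (f \<otimes> idm UU)) \<bullet> rui C (DM f)" by (simp only: ru_nat)
  also have "\<dots> = (ru C (CD g) \<bullet> (g \<otimes> idm UU)) \<bullet> rui C (DM g)" using assms by simp
  also have "\<dots> = (g \<bullet> ru C (DM g)) \<bullet> rui C (DM g)" by (simp only: ru_nat)
  also have "\<dots> = g" by simp
  finally show ?thesis .
qed

lemma fact2: "lu C (a \<odot> b) \<bullet> aso C UU a b = lu C a \<otimes> idm b"
proof -
  let ?X = "aso C UU (UU \<odot> a) b \<bullet> (aso C UU UU a \<otimes> idm b)"
  let ?Y = "(asoi C UU UU a \<otimes> idm b) \<bullet> asoi C UU (UU \<odot> a) b"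
  have XY: "?X \<bullet> ?Y = idm (UU \<odot> ((UU \<odot> a) \<odot> b))"
    by (simp add: merge)
  have L: "(idm UU \<otimes> (lu C (a \<odot> b) \<bullet> aso C UU a b)) \<bullet> ?X = aso C UU a b \<bullet> ((ru C UU \<otimes> idm a) \<otimes> idm b)"
  proof -
    have "(idm UU \<otimes> (lu C (a \<odot> b) \<bullet> aso C UU a b)) \<bullet> ?X
       = (idm UU \<otimes> lu C (a \<odot> b)) \<bullet> ((idm UU \<otimes> aso C UU a b) \<bullet> ?X)"
      by (simp add: tm_cp2)
    also have "\<dots> = (idm UU \<otimes> lu C (a \<odot> b)) \<bullet> (aso C UU UU (a \<odot> b) \<bullet> aso C (UU \<odot> UU) a b)"
      by (simp add: pentagon)
    also have "\<dots> = (ru C UU \<otimes> idm (a \<odot> b)) \<bullet> aso C (UU \<odot> UU) a b"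
      by (simp flip: triangle)
    also have "\<dots> = aso C UU a b \<bullet> ((ru C UU \<otimes> idm a) \<otimes> idm b)"
      using aso_nat[of "ru C UU" "idm a" "idm b"] by simp
    finally show ?thesis .
  qed
  have R: "(idm UU \<otimes> (lu C a \<otimes> idm b)) \<bullet> ?X = aso C UU a b \<bullet> ((ru C UU \<otimes> idm a) \<otimes> idm b)"
  proof -
    have "(idm UU \<otimes> (lu C a \<otimes> idm b)) \<bullet> ?X = aso C UU a b \<bullet> (((idm UU \<otimes> lu C a) \<otimes> idm b) \<bullet> (aso C UU UU a \<otimes> idm b))"
      using aso_nat[of "idm UU" "lu C a" "idm b"] by (simp flip: assoc)
    also have "\<dots> = aso C UU a b \<bullet> ((ru C UU \<otimes> idm a) \<otimes> idm b)"
      by (simp flip: tm_cp1 add: triangle)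
    finally show ?thesis .
  qed
  have "idm UU \<otimes> (lu C (a \<odot> b) \<bullet> aso C UU a b) = idm UU \<otimes> (lu C a \<otimes> idm b)"
  proof -
    have "idm UU \<otimes> (lu C (a \<odot> b) \<bullet> aso C UU a b) = ((idm UU \<otimes> (lu C (a \<odot> b) \<bullet> aso C UU a b)) \<bullet> ?X) \<bullet> ?Y"
      by (simp add: merge)
    also have "\<dots> = ((idm UU \<otimes> (lu C a \<otimes> idm b)) \<bullet> ?X) \<bullet> ?Y" using L R by simp
    also have "\<dots> = idm UU \<otimes> (lu C a \<otimes> idm b)" by (simp add: merge)
    finally show ?thesis .
  qed
  thus ?thesis by (rule cancelL) simp_all
qed

lemma fact2': "(lu C a \<otimes> idm b) \<bullet> asoi C UU a b = lu C (a \<odot> b)"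
  by (simp flip: fact2)

lemma fact3: "(idm a \<otimes> ru C b) \<bullet> aso C a b UU = ru C (a \<odot> b)"
proof -
  have "aso C a b UU \<bullet> (ru C (a \<odot> b) \<otimes> idm UU) = aso C a b UU \<bullet> (((idm a \<otimes> ru C b) \<bullet> aso C a b UU) \<otimes> idm UU)"
  proof -
    have "aso C a b UU \<bullet> (ru C (a \<odot> b) \<otimes> idm UU) = aso C a b UU \<bullet> ((idm (a \<odot> b) \<otimes> lu C UU) \<bullet> aso C (a \<odot> b) UU UU)"
      by (simp add: triangle)
    also have "\<dots> = (idm a \<otimes> (idm b \<otimes> lu C UU)) \<bullet> (aso C a b (UU \<odot> UU) \<bullet> aso C (a \<odot> b) UU UU)"
      using aso_nat[of "idm a" "idm b" "lu C UU"] by (simp flip: assoc)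
    also have "\<dots> = (idm a \<otimes> (idm b \<otimes> lu C UU)) \<bullet> ((idm a \<otimes> aso C b UU UU) \<bullet> (aso C a (b \<odot> UU) UU \<bullet> (aso C a b UU \<otimes> idm UU)))"
      by (simp add: pentagon)
    also have "\<dots> = (idm a \<otimes> (ru C b \<otimes> idm UU)) \<bullet> (aso C a (b \<odot> UU) UU \<bullet> (aso C a b UU \<otimes> idm UU))"
      by (simp add: merge triangle flip: assoc)
    also have "\<dots> = aso C a b UU \<bullet> (((idm a \<otimes> ru C b) \<otimes> idm UU) \<bullet> (aso C a b UU \<otimes> idm UU))"
      using aso_nat[of "idm a" "ru C b" "idm UU"] by (simp flip: assoc)
    also have "\<dots> = aso C a b UU \<bullet> (((idm a \<otimes> ru C b) \<bullet> aso C a b UU) \<otimes> idm UU)"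
      by (simp add: merge)
    finally show ?thesis .
  qed
  hence "asoi C a b UU \<bullet> (aso C a b UU \<bullet> (ru C (a \<odot> b) \<otimes> idm UU)) = asoi C a b UU \<bullet> (aso C a b UU \<bullet> (((idm a \<otimes> ru C b) \<bullet> aso C a b UU) \<otimes> idm UU))"
    by simp
  hence "ru C (a \<odot> b) \<otimes> idm UU = ((idm a \<otimes> ru C b) \<bullet> aso C a b UU) \<otimes> idm UU" by simp
  thus ?thesis by (rule cancelR[symmetric]) simp_all
qed

lemma luU: "lu C (UU \<odot> b) = idm UU \<otimes> lu C b"
proof -
  have "lu C (UU \<odot> b) = lui C b \<bullet> (lu C b \<bullet> lu C (UU \<odot> b))" by simp
  also have "\<dots> = lui C b \<bullet> (lu C b \<bullet> (idm UU \<otimes> lu C b))" using lu_nat[of "lu C b"] by simp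
  also have "\<dots> = idm UU \<otimes> lu C b" by simp
  finally show ?thesis .
qed
lemma ruU: "ru C (a \<odot> UU) = ru C a \<otimes> idm UU"
proof -
  have "ru C (a \<odot> UU) = rui C a \<bullet> (ru C a \<bullet> ru C (a \<odot> UU))" by simp
  also have "\<dots> = rui C a \<bullet> (ru C a \<bullet> (ru C a \<otimes> idm UU))" using ru_nat[of "ru C a"] by simp
  also have "\<dots> = ru C a \<otimes> idm UU" by simp
  finally show ?thesis .
qed

lemma fact1: "lu C UU = ru C UU"
proof -
  have "lu C UU \<otimes> idm UU = ru C UU \<otimes> idm UU"
    using fact2[of UU UU] triangle[of UU UU] by (simp add: luU)
  thus ?thesis by (rule cancelR) simp_all
qed

lemma fact4: "lu C a \<bullet> br C a UU = ru C a"
proof -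
  define u where "u = lu C a \<bullet> br C a UU"
  have [simp]: "DM u = a \<odot> UU" "CD u = a" unfolding u_def by simp_all
  have "u \<bullet> (ru C a \<otimes> idm UU) = lu C a \<bullet> (br C a UU \<bullet> ((idm a \<otimes> lu C UU) \<bullet> aso C a UU UU))"
    unfolding u_def by (simp add: triangle)
  also have "\<dots> = lu C a \<bullet> ((lu C UU \<otimes> idm a) \<bullet> (br C a (UU \<odot> UU) \<bullet> aso C a UU UU))"
    using br_nat[of "idm a" "lu C UU"] by (simp flip: assoc)
  also have "\<dots> = lu C a \<bullet> ((lu C UU \<otimes> idm a) \<bullet> (asoi C UU UU a \<bullet> (aso C UU UU a \<bullet> (br C a (UU \<odot> UU) \<bullet> aso C a UU UU))))"
    by simp
  also have "\<dots> = lu C a \<bullet> ((lu C UU \<otimes> idm a) \<bullet> (asoi C UU UU a \<bullet> ((idm UU \<otimes> br C a UU) \<bullet> (aso C UU a UU \<bullet> (br C a UU \<otimes> idm UU)))))"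
    by (simp add: hex1)
  also have "\<dots> = lu C a \<bullet> (lu C (UU \<odot> a) \<bullet> ((idm UU \<otimes> br C a UU) \<bullet> (aso C UU a UU \<bullet> (br C a UU \<otimes> idm UU))))"
    by (simp flip: fact2' assoc)
  also have "\<dots> = lu C a \<bullet> ((idm UU \<otimes> u) \<bullet> (aso C UU a UU \<bullet> (br C a UU \<otimes> idm UU)))"
    unfolding u_def luU by (simp add: merge flip: assoc)
  also have "\<dots> = u \<bullet> (lu C (a \<odot> UU) \<bullet> (aso C UU a UU \<bullet> (br C a UU \<otimes> idm UU)))"
    using lu_nat[of u] by (simp flip: assoc)
  also have "\<dots> = u \<bullet> (u \<otimes> idm UU)"
    unfolding u_def by (simp add: merge tailify[OF fact2])
  finally have eq: "u \<bullet> (ru C a \<otimes> idm UU) = u \<bullet> (u \<otimes> idm UU)" .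
  have "ru C a \<otimes> idm UU = (bri C a UU \<bullet> lui C a) \<bullet> (u \<bullet> (ru C a \<otimes> idm UU))"
    unfolding u_def by simp
  also have "\<dots> = (bri C a UU \<bullet> lui C a) \<bullet> (u \<bullet> (u \<otimes> idm UU))" using eq by simp
  also have "\<dots> = u \<otimes> idm UU" unfolding u_def by simp
  finally have "ru C a \<otimes> idm UU = u \<otimes> idm UU" .
  hence "ru C a = u" by (rule cancelR) simp_all
  thus ?thesis unfolding u_def by simp
qed

lemma mid4_obj[simp]: "DM (mid4 C a b) = (a \<odot> a) \<odot> (b \<odot> b)" "CD (mid4 C a b) = (a \<odot> b) \<odot> (a \<odot> b)"
  unfolding mid4_def by simp_all

lemma triangle': "(ru C a \<otimes> idm b) \<bullet> asoi C a UU b = idm a \<otimes> lu C b"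
proof -
  have "(ru C a \<otimes> idm b) \<bullet> asoi C a UU b = ((idm a \<otimes> lu C b) \<bullet> aso C a UU b) \<bullet> asoi C a UU b"
    by (simp only: triangle)
  thus ?thesis by simp
qed
lemma brU: "br C a UU = lui C a \<bullet> ru C a"
proof -
  have "br C a UU = lui C a \<bullet> (lu C a \<bullet> br C a UU)" by simp
  thus ?thesis by (simp only: fact4)
qed

lemma luiU: "lui C UU = rui C UU"
proof -
  have "lui C UU = lui C UU \<bullet> (ru C UU \<bullet> rui C UU)" by simp
  also have "\<dots> = rui C UU" by (simp flip: fact1)
  finally show ?thesis .
qed

lemma asoi_nat: "asoi C (CD f) (CD g) (CD h) \<bullet> (f \<otimes> (g \<otimes> h)) = ((f \<otimes> g) \<otimes> h) \<bullet> asoi C (DM f) (DM g) (DM h)"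
proof -
  have "asoi C (CD f) (CD g) (CD h) \<bullet> (f \<otimes> (g \<otimes> h)) = asoi C (CD f) (CD g) (CD h) \<bullet> (((f \<otimes> (g \<otimes> h)) \<bullet> aso C (DM f) (DM g) (DM h)) \<bullet> asoi C (DM f) (DM g) (DM h))"
    by simp
  also have "\<dots> = asoi C (CD f) (CD g) (CD h) \<bullet> ((aso C (CD f) (CD g) (CD h) \<bullet> ((f \<otimes> g) \<otimes> h)) \<bullet> asoi C (DM f) (DM g) (DM h))"
    by (simp only: aso_nat)
  also have "\<dots> = ((f \<otimes> g) \<otimes> h) \<bullet> asoi C (DM f) (DM g) (DM h)" by simp
  finally show ?thesis .
qed
lemma lui_nat: "lui C (CD f) \<bullet> f = (idm UU \<otimes> f) \<bullet> lui C (DM f)"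
proof -
  have "lui C (CD f) \<bullet> f = lui C (CD f) \<bullet> ((f \<bullet> lu C (DM f)) \<bullet> lui C (DM f))" by simp
  also have "\<dots> = lui C (CD f) \<bullet> ((lu C (CD f) \<bullet> (idm UU \<otimes> f)) \<bullet> lui C (DM f))"
    by (simp only: lu_nat)
  also have "\<dots> = (idm UU \<otimes> f) \<bullet> lui C (DM f)" by simp
  finally show ?thesis .
qed
lemma rui_nat: "rui C (CD f) \<bullet> f = (f \<otimes> idm UU) \<bullet> rui C (DM f)"
proof -
  have "rui C (CD f) \<bullet> f = rui C (CD f) \<bullet> ((f \<bullet> ru C (DM f)) \<bullet> rui C (DM f))" by simp
  also have "\<dots> = rui C (CD f) \<bullet> ((ru C (CD f) \<bullet> (f \<otimes> idm UU)) \<bullet> rui C (DM f))"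
    by (simp only: ru_nat)
  also have "\<dots> = (f \<otimes> idm UU) \<bullet> rui C (DM f)" by simp
  finally show ?thesis .
qed
lemma pentagon_inv: "asoi C (a \<odot> b) c d \<bullet> asoi C a b (c \<odot> d) =
       (asoi C a b c \<otimes> idm d) \<bullet> (asoi C a (b \<odot> c) d \<bullet> (idm a \<otimes> asoi C b c d))"
proof -
  let ?L = "asoi C (a \<odot> b) c d \<bullet> asoi C a b (c \<odot> d)"
  let ?R = "(asoi C a b c \<otimes> idm d) \<bullet> (asoi C a (b \<odot> c) d \<bullet> (idm a \<otimes> asoi C b c d))"
  have "?L = ?L \<bullet> ((idm a \<otimes> aso C b c d) \<bullet> (aso C a (b \<odot> c) d \<bullet> ((aso C a b c \<otimes> idm d) \<bullet> ?R)))"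
    by (simp add: merge)
  also have "\<dots> = ?L \<bullet> ((aso C a b (c \<odot> d) \<bullet> aso C (a \<odot> b) c d) \<bullet> ?R)"
    by (simp add: pentagon)
  also have "\<dots> = ?R" by simp
  finally show ?thesis by simp
qed
lemma pent_tail: "CD r = a \<odot> (b \<odot> (c \<odot> d)) \<Longrightarrow> (asoi C a b c \<otimes> idm d) \<bullet> (asoi C a (b \<odot> c) d \<bullet> ((idm a \<otimes> asoi C b c d) \<bullet> r)) = asoi C (a \<odot> b) c d \<bullet> (asoi C a b (c \<odot> d) \<bullet> r)"
proof -
  assume r: "CD r = a \<odot> (b \<odot> (c \<odot> d))"
  have "asoi C (a \<odot> b) c d \<bullet> (asoi C a b (c \<odot> d) \<bullet> r) = (asoi C (a \<odot> b) c d \<bullet> asoi C a b (c \<odot> d)) \<bullet> r"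
    using r by simp
  also have "\<dots> = ((asoi C a b c \<otimes> idm d) \<bullet> (asoi C a (b \<odot> c) d \<bullet> (idm a \<otimes> asoi C b c d))) \<bullet> r"
    by (simp only: pentagon_inv)
  also have "\<dots> = (asoi C a b c \<otimes> idm d) \<bullet> (asoi C a (b \<odot> c) d \<bullet> ((idm a \<otimes> asoi C b c d) \<bullet> r))"
    using r by simp
  finally show ?thesis by simp
qed

lemma fact2i: "lui C (a \<odot> b) = aso C UU a b \<bullet> (lui C a \<otimes> idm b)"
proof -
  have "lui C (a \<odot> b) = aso C UU a b \<bullet> ((asoi C UU a b \<bullet> lui C (a \<odot> b)) \<bullet> (lu C a \<otimes> idm b)) \<bullet> (lui C a \<otimes> idm b)"
    by (simp add: merge)
  also have "\<dots> = aso C UU a b \<bullet> (lui C a \<otimes> idm b)"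
    by (simp flip: fact2)
  finally show ?thesis .
qed
lemma fact3i: "rui C (a \<odot> b) = asoi C a b UU \<bullet> (idm a \<otimes> rui C b)"
proof -
  have "rui C (a \<odot> b) = asoi C a b UU \<bullet> ((idm a \<otimes> rui C b) \<bullet> (((idm a \<otimes> ru C b) \<bullet> aso C a b UU) \<bullet> rui C (a \<odot> b)))"
    by (simp add: merge)
  also have "\<dots> = asoi C a b UU \<bullet> ((idm a \<otimes> rui C b) \<bullet> (ru C (a \<odot> b) \<bullet> rui C (a \<odot> b)))"
    by (simp only: fact3)
  also have "\<dots> = asoi C a b UU \<bullet> (idm a \<otimes> rui C b)" by simp
  finally show ?thesis .
qed
lemma fact2j: "asoi C UU a b \<bullet> lui C (a \<odot> b) = lui C a \<otimes> idm b"
  by (simp add: fact2i)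
lemma fact3j: "aso C a b UU \<bullet> rui C (a \<odot> b) = idm a \<otimes> rui C b"
  by (simp add: fact3i)

end

locale HX = BMC C for C :: "('o,'m) bmcc" +
  fixes H :: 'o and d e mu jj S Si T :: 'm
  assumes hd[simp]: "DM d = H" "CD d = H \<odot> H" and he[simp]: "DM e = H" "CD e = UU"
  and hmu[simp]: "DM mu = H \<odot> H" "CD mu = H" and hj[simp]: "DM jj = UU" "CD jj = H"
  and hS[simp]: "DM S = H" "CD S = H" and hSi[simp]: "DM Si = H" "CD Si = H"
  and hT[simp]: "DM T = UU" "CD T = H"
  and coassoc: "aso C H H H \<bullet> ((d \<otimes> idm H) \<bullet> d) = (idm H \<otimes> d) \<bullet> d"
  and counitL: "lu C H \<bullet> ((e \<otimes> idm H) \<bullet> d) = idm H"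
  and counitR: "ru C H \<bullet> ((idm H \<otimes> e) \<bullet> d) = idm H"
  and massoc: "mu \<bullet> (mu \<otimes> idm H) = mu \<bullet> ((idm H \<otimes> mu) \<bullet> aso C H H H)"
  and unitL: "mu \<bullet> (jj \<otimes> idm H) = lu C H" and unitR: "mu \<bullet> (idm H \<otimes> jj) = ru C H"
  and mult: "d \<bullet> mu = (mu \<otimes> mu) \<bullet> (mid4 C H H \<bullet> (d \<otimes> d))"
  and antiR: "mu \<bullet> ((idm H \<otimes> S) \<bullet> d) = jj \<bullet> e" and antiL: "mu \<bullet> ((S \<otimes> idm H) \<bullet> d) = jj \<bullet> e"
  and SSi: "S \<bullet> Si = idm H" "Si \<bullet> S = idm H"
  and integral: "mu \<bullet> ((idm H \<otimes> T) \<bullet> rui C H) = T \<bullet> e"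
begin

abbreviation "PP \<equiv> (idm H \<otimes> mu) \<bullet> (aso C H H H \<bullet> ((br C H H \<otimes> idm H) \<bullet> asoi C H H H))"
abbreviation "tau \<equiv> d \<bullet> T"

lemma cR: "(idm H \<otimes> e) \<bullet> d = rui C H"
proof -
  have "(idm H \<otimes> e) \<bullet> d = rui C H \<bullet> (ru C H \<bullet> ((idm H \<otimes> e) \<bullet> d))" by simp
  also have "\<dots> = rui C H \<bullet> idm H" by (simp only: counitR)
  finally show ?thesis by simp
qed
lemma cL: "(e \<otimes> idm H) \<bullet> d = lui C H"
proof -
  have "(e \<otimes> idm H) \<bullet> d = lui C H \<bullet> (lu C H \<bullet> ((e \<otimes> idm H) \<bullet> d))" by simp
  also have "\<dots> = lui C H \<bullet> idm H" by (simp only: counitL)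
  finally show ?thesis by simp
qed

lemma M4: "(mu \<otimes> mu) \<bullet> mid4 C H H = (mu \<otimes> idm H) \<bullet> (asoi C H H H \<bullet> ((idm H \<otimes> PP) \<bullet> aso C H H (H \<odot> H)))"
proof -
  have 1: "(mu \<otimes> mu) \<bullet> asoi C H H (H \<odot> H) = (mu \<otimes> idm H) \<bullet> (asoi C H H H \<bullet> (idm H \<otimes> (idm H \<otimes> mu)))"
    using asoi_nat[of "idm H" "idm H" mu] by (simp add: merge)
  show ?thesis unfolding mid4_def by (simp add: tailify[OF 1] merge)
qed

lemma Qlem: "aso C H H (H \<odot> H) \<bullet> ((d \<otimes> tau) \<bullet> rui C H) = (idm H \<otimes> ((idm H \<otimes> tau) \<bullet> rui C H)) \<bullet> d"
proof -
  have "aso C H H (H \<odot> H) \<bullet> ((d \<otimes> tau) \<bullet> rui C H) = aso C H H (H \<odot> H) \<bullet> (((idm H \<otimes> idm H) \<otimes> tau) \<bullet> ((d \<otimes> idm UU) \<bullet> rui C H))"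
    by (simp add: merge)
  also have "\<dots> = aso C H H (H \<odot> H) \<bullet> (((idm H \<otimes> idm H) \<otimes> tau) \<bullet> (rui C (H \<odot> H) \<bullet> d))"
    using rui_nat[of d] by simp
  also have "\<dots> = (idm H \<otimes> (idm H \<otimes> tau)) \<bullet> (aso C H H UU \<bullet> (rui C (H \<odot> H) \<bullet> d))"
    using aso_nat[of "idm H" "idm H" tau] by (simp flip: assoc)
  also have "\<dots> = (idm H \<otimes> (idm H \<otimes> tau)) \<bullet> ((idm H \<otimes> rui C H) \<bullet> d)"
    by (simp add: fact3i)
  also have "\<dots> = (idm H \<otimes> ((idm H \<otimes> tau) \<bullet> rui C H)) \<bullet> d"
    by (simp add: merge)
  finally show ?thesis .
qed

lemma stepB: "d \<bullet> (mu \<bullet> ((idm H \<otimes> T) \<bullet> rui C H)) = (mu \<otimes> idm H) \<bullet> (asoi C H H H \<bullet> ((idm H \<otimes> (PP \<bullet> ((idm H \<otimes> tau) \<bullet> rui C H))) \<bullet> d))"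
proof -
  have "d \<bullet> (mu \<bullet> ((idm H \<otimes> T) \<bullet> rui C H)) = (mu \<otimes> mu) \<bullet> (mid4 C H H \<bullet> ((d \<otimes> d) \<bullet> ((idm H \<otimes> T) \<bullet> rui C H)))"
    by (simp add: tailify[OF mult])
  also have "\<dots> = (mu \<otimes> idm H) \<bullet> (asoi C H H H \<bullet> ((idm H \<otimes> PP) \<bullet> (aso C H H (H \<odot> H) \<bullet> ((d \<otimes> tau) \<bullet> rui C H))))"
    by (simp add: tailify[OF M4] merge)
  also have "\<dots> = (mu \<otimes> idm H) \<bullet> (asoi C H H H \<bullet> ((idm H \<otimes> (PP \<bullet> ((idm H \<otimes> tau) \<bullet> rui C H))) \<bullet> d))"
    by (simp add: Qlem merge)
  finally show ?thesis .
qed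

lemma massoc': "mu \<bullet> (idm H \<otimes> mu) = mu \<bullet> ((mu \<otimes> idm H) \<bullet> asoi C H H H)"
proof -
  have "mu \<bullet> ((mu \<otimes> idm H) \<bullet> asoi C H H H) = (mu \<bullet> (mu \<otimes> idm H)) \<bullet> asoi C H H H" by simp
  also have "\<dots> = (mu \<bullet> ((idm H \<otimes> mu) \<bullet> aso C H H H)) \<bullet> asoi C H H H" by (simp only: massoc)
  also have "\<dots> = mu \<bullet> (idm H \<otimes> mu)" by simp
  finally show ?thesis by simp
qed
lemma coassoc': "asoi C H H H \<bullet> ((idm H \<otimes> d) \<bullet> d) = (d \<otimes> idm H) \<bullet> d"
proof -
  have "asoi C H H H \<bullet> ((idm H \<otimes> d) \<bullet> d) = asoi C H H H \<bullet> (aso C H H H \<bullet> ((d \<otimes> idm H) \<bullet> d))"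
    by (simp only: coassoc)
  thus ?thesis by simp
qed
lemma SD: "asoi C H H H \<bullet> ((S \<otimes> d) \<bullet> d) = ((S \<otimes> idm H) \<otimes> idm H) \<bullet> ((d \<otimes> idm H) \<bullet> d)"
proof -
  have "asoi C H H H \<bullet> ((S \<otimes> d) \<bullet> d) = asoi C H H H \<bullet> ((S \<otimes> idm (H \<odot> H)) \<bullet> ((idm H \<otimes> d) \<bullet> d))"
    by (simp add: merge)
  also have "\<dots> = ((S \<otimes> idm H) \<otimes> idm H) \<bullet> (asoi C H H H \<bullet> ((idm H \<otimes> d) \<bullet> d))"
    using tailify[OF asoi_nat[of S "idm H" "idm H"]] by simp
  also have "\<dots> = ((S \<otimes> idm H) \<otimes> idm H) \<bullet> ((d \<otimes> idm H) \<bullet> d)"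
    by (simp only: coassoc')
  finally show ?thesis .
qed

lemma Keq: assumes [simp]: "DM F = H" "CD F = H \<odot> H"
  shows "(mu \<otimes> idm H) \<bullet> (asoi C H H H \<bullet> ((S \<otimes> ((mu \<otimes> idm H) \<bullet> (asoi C H H H \<bullet> ((idm H \<otimes> F) \<bullet> d)))) \<bullet> d)) = F"
proof -
  have "(mu \<otimes> idm H) \<bullet> (asoi C H H H \<bullet> ((S \<otimes> ((mu \<otimes> idm H) \<bullet> (asoi C H H H \<bullet> ((idm H \<otimes> F) \<bullet> d)))) \<bullet> d))
    = (mu \<otimes> idm H) \<bullet> (asoi C H H H \<bullet> ((idm H \<otimes> (mu \<otimes> idm H)) \<bullet> ((idm H \<otimes> asoi C H H H) \<bullet> ((idm H \<otimes> (idm H \<otimes> F)) \<bullet> ((S \<otimes> d) \<bullet> d)))))"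
    by (simp add: merge)
  also have "\<dots> = (mu \<otimes> idm H) \<bullet> (((idm H \<otimes> mu) \<otimes> idm H) \<bullet> (asoi C H (H \<odot> H) H \<bullet> ((idm H \<otimes> asoi C H H H) \<bullet> ((idm H \<otimes> (idm H \<otimes> F)) \<bullet> ((S \<otimes> d) \<bullet> d)))))"
    using tailify[OF asoi_nat[of "idm H" mu "idm H"]] by simp
  also have "\<dots> = ((mu \<bullet> (idm H \<otimes> mu)) \<otimes> idm H) \<bullet> (asoi C H (H \<odot> H) H \<bullet> ((idm H \<otimes> asoi C H H H) \<bullet> ((idm H \<otimes> (idm H \<otimes> F)) \<bullet> ((S \<otimes> d) \<bullet> d))))"
    by (simp add: merge)
  also have "\<dots> = ((mu \<bullet> ((mu \<otimes> idm H) \<bullet> asoi C H H H)) \<otimes> idm H) \<bullet> (asoi C H (H \<odot> H) H \<bullet> ((idm H \<otimes> asoi C H H H) \<bullet> ((idm H \<otimes> (idm H \<otimes> F)) \<bullet> ((S \<otimes> d) \<bullet> d))))"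
    by (simp only: massoc')
  also have "\<dots> = (mu \<otimes> idm H) \<bullet> (((mu \<otimes> idm H) \<otimes> idm H) \<bullet> ((asoi C H H H \<otimes> idm H) \<bullet> (asoi C H (H \<odot> H) H \<bullet> ((idm H \<otimes> asoi C H H H) \<bullet> ((idm H \<otimes> (idm H \<otimes> F)) \<bullet> ((S \<otimes> d) \<bullet> d))))))"
    by (simp add: merge)
  also have "\<dots> = (mu \<otimes> idm H) \<bullet> (((mu \<otimes> idm H) \<otimes> idm H) \<bullet> (asoi C (H \<odot> H) H H \<bullet> (asoi C H H (H \<odot> H) \<bullet> ((idm H \<otimes> (idm H \<otimes> F)) \<bullet> ((S \<otimes> d) \<bullet> d)))))"
    by (simp add: pent_tail)
  also have "\<dots> = (mu \<otimes> idm H) \<bullet> (asoi C H H H \<bullet> ((mu \<otimes> idm (H \<odot> H)) \<bullet> (asoi C H H (H \<odot> H) \<bullet> ((idm H \<otimes> (idm H \<otimes> F)) \<bullet> ((S \<otimes> d) \<bullet> d)))))"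
    using tailify[OF asoi_nat[of mu "idm H" "idm H"]] by simp
  also have "\<dots> = (mu \<otimes> idm H) \<bullet> (asoi C H H H \<bullet> ((mu \<otimes> idm (H \<odot> H)) \<bullet> ((idm (H \<odot> H) \<otimes> F) \<bullet> (asoi C H H H \<bullet> ((S \<otimes> d) \<bullet> d)))))"
    using tailify[OF asoi_nat[of "idm H" "idm H" F]] by simp
  also have "\<dots> = (mu \<otimes> idm H) \<bullet> (asoi C H H H \<bullet> ((mu \<otimes> idm (H \<odot> H)) \<bullet> ((idm (H \<odot> H) \<otimes> F) \<bullet> (((S \<otimes> idm H) \<otimes> idm H) \<bullet> ((d \<otimes> idm H) \<bullet> d)))))"
    by (simp only: SD)
  also have "\<dots> = (mu \<otimes> idm H) \<bullet> (asoi C H H H \<bullet> ((jj \<otimes> F) \<bullet> ((e \<otimes> idm H) \<bullet> d)))"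
    by (simp add: merge antiL)
  also have "\<dots> = (mu \<otimes> idm H) \<bullet> (asoi C H H H \<bullet> ((jj \<otimes> F) \<bullet> lui C H))"
    by (simp only: cL)
  also have "\<dots> = (mu \<otimes> idm H) \<bullet> (asoi C H H H \<bullet> ((jj \<otimes> idm (H \<odot> H)) \<bullet> ((idm UU \<otimes> F) \<bullet> lui C H)))"
    by (simp add: merge)
  also have "\<dots> = (mu \<otimes> idm H) \<bullet> (asoi C H H H \<bullet> ((jj \<otimes> idm (H \<odot> H)) \<bullet> (lui C (H \<odot> H) \<bullet> F)))"
    using lui_nat[of F] by simp
  also have "\<dots> = (mu \<otimes> idm H) \<bullet> (((jj \<otimes> idm H) \<otimes> idm H) \<bullet> (asoi C UU H H \<bullet> (lui C (H \<odot> H) \<bullet> F)))"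
    using tailify[OF asoi_nat[of jj "idm H" "idm H"]] by simp
  also have "\<dots> = (lu C H \<otimes> idm H) \<bullet> (asoi C UU H H \<bullet> (lui C (H \<odot> H) \<bullet> F))"
    by (simp add: merge unitL)
  also have "\<dots> = F"
    using tailify[OF fact2'[of H H]] by simp
  finally show ?thesis .
qed

lemma stepA: "(mu \<otimes> idm H) \<bullet> (asoi C H H H \<bullet> ((S \<otimes> tau) \<bullet> rui C H)) = PP \<bullet> ((idm H \<otimes> tau) \<bullet> rui C H)"
proof -
  let ?K = "(mu \<otimes> idm H) \<bullet> (asoi C H H H \<bullet> ((S \<otimes> (d \<bullet> (mu \<bullet> ((idm H \<otimes> T) \<bullet> rui C H)))) \<bullet> d))"
  have "?K = (mu \<otimes> idm H) \<bullet> (asoi C H H H \<bullet> ((S \<otimes> (d \<bullet> (T \<bullet> e))) \<bullet> d))"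
    by (simp only: integral)
  also have "\<dots> = (mu \<otimes> idm H) \<bullet> (asoi C H H H \<bullet> ((S \<otimes> tau) \<bullet> ((idm H \<otimes> e) \<bullet> d)))"
    by (simp add: merge)
  also have "\<dots> = (mu \<otimes> idm H) \<bullet> (asoi C H H H \<bullet> ((S \<otimes> tau) \<bullet> rui C H))"
    by (simp only: cR)
  finally have 1: "?K = \<dots>" .
  have "?K = PP \<bullet> ((idm H \<otimes> tau) \<bullet> rui C H)"
    unfolding stepB by (rule Keq) simp_all
  with 1 show ?thesis by simp
qed

lemma part1:
  assumes [simp]: "DM f = H" "CD f = UU" "DM g = H" "CD g = UU"
    and F: "ru C H \<bullet> ((idm H \<otimes> f) \<bullet> (d \<bullet> T)) = jj"
    and G: "lu C H \<bullet> ((g \<otimes> idm H) \<bullet> (d \<bullet> T)) = jj"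
  shows "g = f \<bullet> Si"
proof -
  have Ft: "(idm H \<otimes> f) \<bullet> tau = rui C H \<bullet> jj"
  proof -
    have "(idm H \<otimes> f) \<bullet> tau = rui C H \<bullet> (ru C H \<bullet> ((idm H \<otimes> f) \<bullet> (d \<bullet> T)))" by simp
    thus ?thesis by (simp only: F)
  qed
  have gS: "lu C UU \<bullet> ((g \<otimes> f) \<bullet> ((mu \<otimes> idm H) \<bullet> (asoi C H H H \<bullet> ((S \<otimes> tau) \<bullet> rui C H)))) = g \<bullet> S"
  proof -
    have "lu C UU \<bullet> ((g \<otimes> f) \<bullet> ((mu \<otimes> idm H) \<bullet> (asoi C H H H \<bullet> ((S \<otimes> tau) \<bullet> rui C H))))
      = lu C UU \<bullet> (((g \<bullet> mu) \<otimes> idm UU) \<bullet> ((idm (H \<odot> H) \<otimes> f) \<bullet> (asoi C H H H \<bullet> ((S \<otimes> tau) \<bullet> rui C H))))"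
      by (simp add: merge)
    also have "\<dots> = lu C UU \<bullet> (((g \<bullet> mu) \<otimes> idm UU) \<bullet> (asoi C H H UU \<bullet> ((idm H \<otimes> (idm H \<otimes> f)) \<bullet> ((S \<otimes> tau) \<bullet> rui C H))))"
      using tailify[OF asoi_nat[of "idm H" "idm H" f, symmetric]] by simp
    also have "\<dots> = lu C UU \<bullet> (((g \<bullet> mu) \<otimes> idm UU) \<bullet> (asoi C H H UU \<bullet> ((S \<otimes> (rui C H \<bullet> jj)) \<bullet> rui C H)))"
      by (simp add: merge Ft)
    also have "\<dots> = lu C UU \<bullet> (((g \<bullet> mu) \<otimes> idm UU) \<bullet> (asoi C H H UU \<bullet> ((idm H \<otimes> rui C H) \<bullet> ((S \<otimes> jj) \<bullet> rui C H))))"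
      by (simp add: merge)
    also have "\<dots> = lu C UU \<bullet> (((g \<bullet> mu) \<otimes> idm UU) \<bullet> (rui C (H \<odot> H) \<bullet> ((S \<otimes> jj) \<bullet> rui C H)))"
      using tailify[OF fact3i[of H H, symmetric]] by simp
    also have "\<dots> = lu C UU \<bullet> (rui C UU \<bullet> ((g \<bullet> mu) \<bullet> ((S \<otimes> jj) \<bullet> rui C H)))"
      using tailify[OF rui_nat[of "g \<bullet> mu", symmetric]] by simp
    also have "\<dots> = g \<bullet> (mu \<bullet> ((idm H \<otimes> jj) \<bullet> ((S \<otimes> idm UU) \<bullet> rui C H)))"
      by (simp add: fact1 merge)
    also have "\<dots> = g \<bullet> (mu \<bullet> ((idm H \<otimes> jj) \<bullet> (rui C H \<bullet> S)))"
      using rui_nat[of S] by simp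
    also have "\<dots> = g \<bullet> S"
      using tailify[OF unitR] by simp
    finally show ?thesis .
  qed
  have gf: "lu C UU \<bullet> ((g \<otimes> f) \<bullet> (PP \<bullet> ((idm H \<otimes> tau) \<bullet> rui C H))) = f"
  proof -
    have "lu C UU \<bullet> ((g \<otimes> f) \<bullet> (PP \<bullet> ((idm H \<otimes> tau) \<bullet> rui C H)))
      = lu C UU \<bullet> ((idm UU \<otimes> (f \<bullet> mu)) \<bullet> ((g \<otimes> idm (H \<odot> H)) \<bullet> (aso C H H H \<bullet> ((br C H H \<otimes> idm H) \<bullet> (asoi C H H H \<bullet> ((idm H \<otimes> tau) \<bullet> rui C H))))))"
      by (simp add: merge)
    also have "\<dots> = lu C UU \<bullet> ((idm UU \<otimes> (f \<bullet> mu)) \<bullet> (aso C UU H H \<bullet> (((g \<otimes> idm H) \<otimes> idm H) \<bullet> ((br C H H \<otimes> idm H) \<bullet> (asoi C H H H \<bullet> ((idm H \<otimes> tau) \<bullet> rui C H))))))"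
      using tailify[OF aso_nat[of g "idm H" "idm H", symmetric]] by simp
    also have "\<dots> = lu C UU \<bullet> ((idm UU \<otimes> (f \<bullet> mu)) \<bullet> (aso C UU H H \<bullet> (((br C H UU \<bullet> (idm H \<otimes> g)) \<otimes> idm H) \<bullet> (asoi C H H H \<bullet> ((idm H \<otimes> tau) \<bullet> rui C H)))))"
      using br_nat[of "idm H" g, symmetric] by (simp add: merge)
    also have "\<dots> = lu C UU \<bullet> ((idm UU \<otimes> (f \<bullet> mu)) \<bullet> (aso C UU H H \<bullet> ((lui C H \<otimes> idm H) \<bullet> ((ru C H \<otimes> idm H) \<bullet> (((idm H \<otimes> g) \<otimes> idm H) \<bullet> (asoi C H H H \<bullet> ((idm H \<otimes> tau) \<bullet> rui C H)))))))"
      by (simp add: merge brU)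
    also have "\<dots> = lu C UU \<bullet> ((idm UU \<otimes> (f \<bullet> mu)) \<bullet> (lui C (H \<odot> H) \<bullet> ((ru C H \<otimes> idm H) \<bullet> (((idm H \<otimes> g) \<otimes> idm H) \<bullet> (asoi C H H H \<bullet> ((idm H \<otimes> tau) \<bullet> rui C H))))))"
      using tailify[OF fact2i[of H H, symmetric]] by simp
    also have "\<dots> = f \<bullet> (mu \<bullet> ((ru C H \<otimes> idm H) \<bullet> (((idm H \<otimes> g) \<otimes> idm H) \<bullet> (asoi C H H H \<bullet> ((idm H \<otimes> tau) \<bullet> rui C H)))))"
      using tailify[OF lui_nat[of "f \<bullet> mu", symmetric]] by simp
    also have "\<dots> = f \<bullet> (mu \<bullet> ((ru C H \<otimes> idm H) \<bullet> (asoi C H UU H \<bullet> ((idm H \<otimes> (g \<otimes> idm H)) \<bullet> ((idm H \<otimes> tau) \<bullet> rui C H)))))"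
      using tailify[OF asoi_nat[of "idm H" g "idm H", symmetric]] by simp
    also have "\<dots> = f \<bullet> (mu \<bullet> ((idm H \<otimes> lu C H) \<bullet> ((idm H \<otimes> (g \<otimes> idm H)) \<bullet> ((idm H \<otimes> tau) \<bullet> rui C H))))"
      using tailify[OF triangle'[of H H]] by simp
    also have "\<dots> = f \<bullet> (mu \<bullet> ((idm H \<otimes> jj) \<bullet> rui C H))"
      by (simp add: merge G)
    also have "\<dots> = f" using tailify[OF unitR] by simp
    finally show ?thesis .
  qed
  have "g \<bullet> S = f" using gS gf stepA by simp
  hence "g \<bullet> (S \<bullet> Si) = f \<bullet> Si" by (simp flip: assoc)
  thus ?thesis by (simp add: SSi)
qed

abbreviation "Hs \<equiv> ih C H UU"

lemma part2:
  assumes ev[simp]: "DM (ev C H UU) = Hs \<odot> H" "CD (ev C H UU) = UU"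
    and pb[simp]: "DM pb = H" "CD pb = Hs"
    and pinv: "(lu C H \<bullet> ((ev C H UU \<otimes> idm H) \<bullet> (asoi C Hs H H \<bullet> ((idm Hs \<otimes> d) \<bullet> ((idm Hs \<otimes> T) \<bullet> rui C Hs))))) \<bullet> pb = idm H"
    and qb[simp]: "DM qb = H" "CD qb = Hs"
    and qinv: "(ru C H \<bullet> ((idm H \<otimes> ev C H UU) \<bullet> ((idm H \<otimes> br C H Hs) \<bullet> (aso C H H Hs \<bullet> ((d \<otimes> idm Hs) \<bullet> ((T \<otimes> idm Hs) \<bullet> lui C Hs)))))) \<bullet> qb = idm H"
  shows "ev C H UU \<bullet> ((pb \<otimes> idm H) \<bullet> ((jj \<otimes> idm H) \<bullet> lui C H)) =
         ev C H UU \<bullet> (br C H Hs \<bullet> ((idm H \<otimes> qb) \<bullet> ((idm H \<otimes> jj) \<bullet> (rui C H \<bullet> Si))))"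
proof -
  let ?g = "ev C H UU \<bullet> ((pb \<otimes> idm H) \<bullet> ((jj \<otimes> idm H) \<bullet> lui C H))"
  let ?f = "ev C H UU \<bullet> (br C H Hs \<bullet> ((idm H \<otimes> qb) \<bullet> ((idm H \<otimes> jj) \<bullet> rui C H)))"
  have G: "lu C H \<bullet> ((?g \<otimes> idm H) \<bullet> (d \<bullet> T)) = jj"
  proof -
    have "jj = ((lu C H \<bullet> ((ev C H UU \<otimes> idm H) \<bullet> (asoi C Hs H H \<bullet> ((idm Hs \<otimes> d) \<bullet> ((idm Hs \<otimes> T) \<bullet> rui C Hs))))) \<bullet> pb) \<bullet> jj"
      unfolding pinv by simp
    also have "\<dots> = lu C H \<bullet> ((ev C H UU \<otimes> idm H) \<bullet> (asoi C Hs H H \<bullet> ((idm Hs \<otimes> d) \<bullet> ((idm Hs \<otimes> T) \<bullet> (rui C Hs \<bullet> (pb \<bullet> jj))))))"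
      by simp
    also have "\<dots> = lu C H \<bullet> ((ev C H UU \<otimes> idm H) \<bullet> (asoi C Hs H H \<bullet> ((idm Hs \<otimes> d) \<bullet> ((idm Hs \<otimes> T) \<bullet> (((pb \<bullet> jj) \<otimes> idm UU) \<bullet> rui C UU)))))"
      using rui_nat[of "pb \<bullet> jj"] by simp
    also have "\<dots> = lu C H \<bullet> ((ev C H UU \<otimes> idm H) \<bullet> (asoi C Hs H H \<bullet> (((pb \<bullet> jj) \<otimes> idm (H \<odot> H)) \<bullet> ((idm UU \<otimes> tau) \<bullet> rui C UU))))"
      by (simp add: merge)
    also have "\<dots> = lu C H \<bullet> ((ev C H UU \<otimes> idm H) \<bullet> ((((pb \<bullet> jj) \<otimes> idm H) \<otimes> idm H) \<bullet> (asoi C UU H H \<bullet> ((idm UU \<otimes> tau) \<bullet> lui C UU))))"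
      using tailify[OF asoi_nat[of "pb \<bullet> jj" "idm H" "idm H"]] by (simp add: luiU)
    also have "\<dots> = lu C H \<bullet> ((ev C H UU \<otimes> idm H) \<bullet> ((((pb \<bullet> jj) \<otimes> idm H) \<otimes> idm H) \<bullet> (asoi C UU H H \<bullet> (lui C (H \<odot> H) \<bullet> tau))))"
      using lui_nat[of tau] by simp
    also have "\<dots> = lu C H \<bullet> ((ev C H UU \<otimes> idm H) \<bullet> ((((pb \<bullet> jj) \<otimes> idm H) \<otimes> idm H) \<bullet> ((lui C H \<otimes> idm H) \<bullet> tau)))"
      using tailify[OF fact2j[of H H]] by simp
    also have "\<dots> = lu C H \<bullet> ((?g \<otimes> idm H) \<bullet> (d \<bullet> T))"
      by (simp add: merge)
    finally show ?thesis by simp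
  qed
  have F: "ru C H \<bullet> ((idm H \<otimes> ?f) \<bullet> (d \<bullet> T)) = jj"
  proof -
    have "jj = ((ru C H \<bullet> ((idm H \<otimes> ev C H UU) \<bullet> ((idm H \<otimes> br C H Hs) \<bullet> (aso C H H Hs \<bullet> ((d \<otimes> idm Hs) \<bullet> ((T \<otimes> idm Hs) \<bullet> lui C Hs)))))) \<bullet> qb) \<bullet> jj"
      unfolding qinv by simp
    also have "\<dots> = ru C H \<bullet> ((idm H \<otimes> ev C H UU) \<bullet> ((idm H \<otimes> br C H Hs) \<bullet> (aso C H H Hs \<bullet> ((d \<otimes> idm Hs) \<bullet> ((T \<otimes> idm Hs) \<bullet> (lui C Hs \<bullet> (qb \<bullet> jj)))))))"
      by simp
    also have "\<dots> = ru C H \<bullet> ((idm H \<otimes> ev C H UU) \<bullet> ((idm H \<otimes> br C H Hs) \<bullet> (aso C H H Hs \<bullet> ((d \<otimes> idm Hs) \<bullet> ((T \<otimes> idm Hs) \<bullet> ((idm UU \<otimes> (qb \<bullet> jj)) \<bullet> lui C UU))))))"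
      using lui_nat[of "qb \<bullet> jj"] by simp
    also have "\<dots> = ru C H \<bullet> ((idm H \<otimes> ev C H UU) \<bullet> ((idm H \<otimes> br C H Hs) \<bullet> (aso C H H Hs \<bullet> ((idm (H \<odot> H) \<otimes> (qb \<bullet> jj)) \<bullet> ((tau \<otimes> idm UU) \<bullet> lui C UU)))))"
      by (simp add: merge)
    also have "\<dots> = ru C H \<bullet> ((idm H \<otimes> ev C H UU) \<bullet> ((idm H \<otimes> br C H Hs) \<bullet> ((idm H \<otimes> (idm H \<otimes> (qb \<bullet> jj))) \<bullet> (aso C H H UU \<bullet> ((tau \<otimes> idm UU) \<bullet> rui C UU)))))"
      using tailify[OF aso_nat[of "idm H" "idm H" "qb \<bullet> jj"]] by (simp add: luiU)
    also have "\<dots> = ru C H \<bullet> ((idm H \<otimes> ev C H UU) \<bullet> ((idm H \<otimes> br C H Hs) \<bullet> ((idm H \<otimes> (idm H \<otimes> (qb \<bullet> jj))) \<bullet> (aso C H H UU \<bullet> (rui C (H \<odot> H) \<bullet> tau)))))"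
      using rui_nat[of tau] by simp
    also have "\<dots> = ru C H \<bullet> ((idm H \<otimes> ev C H UU) \<bullet> ((idm H \<otimes> br C H Hs) \<bullet> ((idm H \<otimes> (idm H \<otimes> (qb \<bullet> jj))) \<bullet> ((idm H \<otimes> rui C H) \<bullet> tau))))"
      using tailify[OF fact3j[of H H]] by simp
    also have "\<dots> = ru C H \<bullet> ((idm H \<otimes> ?f) \<bullet> (d \<bullet> T))"
      by (simp add: merge)
    finally show ?thesis by simp
  qed
  have "?g = ?f \<bullet> Si" by (rule part1) (simp_all add: F G)
  thus ?thesis by simp
qed
end
theorem mainTheorem3:
  fixes C :: "('o, 'm) bmcc"
    and A :: "'x \<Rightarrow> 'x \<Rightarrow> 'o"
    and m :: "'x \<Rightarrow> 'x \<Rightarrow> 'x \<Rightarrow> 'm"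
    and j :: "'x \<Rightarrow> 'm"
    and dl ep s si t :: "'x \<Rightarrow> 'x \<Rightarrow> 'm"
    and x :: 'x
  assumes "braided C" and "closed C"
    and "hopf C A m j dl ep s"
    and "\<forall>y z. is_inverse C (s y z) (si y z) (A y z) (A z y)"
    and "left_integral_family C A m ep t"
    and "nonsingular C A dl t"
  shows "(\<forall>f g. hom C f (A x x) (U C) \<and> hom C g (A x x) (U C) \<and>
            cp C (ru C (A x x)) (cp C (tm C (ident C (A x x)) f) (cp C (dl x x) (t x x))) = j x \<and>
            cp C (lu C (A x x)) (cp C (tm C g (ident C (A x x))) (cp C (dl x x) (t x x))) = j x
          \<longrightarrow> g = cp C f (si x x))
       \<and> (\<forall>pb qb. right_inverse C pb (pmap C A dl t x x) \<and> right_inverse C qb (qmap C A dl t x x)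
          \<longrightarrow> cp C (ev C (A x x) (U C))
                (cp C (tm C pb (ident C (A x x)))
                  (cp C (tm C (j x) (ident C (A x x))) (lui C (A x x))))
            = cp C (ev C (A x x) (U C))
                (cp C (br C (A x x) (dual C (A x x)))
                  (cp C (tm C (ident C (A x x)) qb)
                    (cp C (tm C (ident C (A x x)) (j x))
                      (cp C (rui C (A x x)) (si x x))))))"
proof -
  note a = assms
  interpret BMC C using a(1) by unfold_locales
  have hp: "hopf C A m j dl ep s" by fact
  have sh: "semi_hopf C A m j dl ep" using hp unfolding hopf_def by auto
  have vc: "vcat C A m j" using sh unfolding semi_hopf_def by auto
  have co: "comonoid C (A x x) (dl x x) (ep x x)" using sh unfolding semi_hopf_def by auto
  have cm: "comonoid_mor C (m x x x) (ot C (A x x) (A x x)) (tens_comult C (A x x) (A x x) (dl x x) (dl x x))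
           (tens_counit C (ep x x) (ep x x)) (A x x) (dl x x) (ep x x)" using sh unfolding semi_hopf_def by auto
  have si: "is_inverse C (s x x) (si x x) (A x x) (A x x)" using a(4) by auto
  have li: "left_integral_family C A m ep t" by fact
  interpret HX C "A x x" "dl x x" "ep x x" "m x x x" "j x" "s x x" "si x x" "t x x"
  proof unfold_locales
    show "DM (dl x x) = A x x" "CD (dl x x) = A x x \<odot> A x x" "DM (ep x x) = A x x" "CD (ep x x) = UU"
      "aso C (A x x) (A x x) (A x x) \<bullet> ((dl x x \<otimes> idm (A x x)) \<bullet> dl x x) = (idm (A x x) \<otimes> dl x x) \<bullet> dl x x"
      "lu C (A x x) \<bullet> ((ep x x \<otimes> idm (A x x)) \<bullet> dl x x) = idm (A x x)"
      "ru C (A x x) \<bullet> ((idm (A x x) \<otimes> ep x x) \<bullet> dl x x) = idm (A x x)"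
      using co unfolding comonoid_def hom_def by auto
    show "DM (m x x x) = A x x \<odot> A x x" "CD (m x x x) = A x x" "DM (j x) = UU" "CD (j x) = A x x"
      "m x x x \<bullet> (m x x x \<otimes> idm (A x x)) = m x x x \<bullet> ((idm (A x x) \<otimes> m x x x) \<bullet> aso C (A x x) (A x x) (A x x))"
      "m x x x \<bullet> (j x \<otimes> idm (A x x)) = lu C (A x x)" "m x x x \<bullet> (idm (A x x) \<otimes> j x) = ru C (A x x)"
      using vc unfolding vcat_def hom_def by auto
    show "dl x x \<bullet> m x x x = (m x x x \<otimes> m x x x) \<bullet> (mid4 C (A x x) (A x x) \<bullet> (dl x x \<otimes> dl x x))"
      using cm unfolding comonoid_mor_def tens_comult_def by auto
    show "m x x x \<bullet> ((idm (A x x) \<otimes> s x x) \<bullet> dl x x) = j x \<bullet> ep x x"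
      "m x x x \<bullet> ((s x x \<otimes> idm (A x x)) \<bullet> dl x x) = j x \<bullet> ep x x"
      using hp unfolding hopf_def by auto
    show "DM (s x x) = A x x" "CD (s x x) = A x x" "DM (si x x) = A x x" "CD (si x x) = A x x"
      "s x x \<bullet> si x x = idm (A x x)" "si x x \<bullet> s x x = idm (A x x)"
      using si unfolding is_inverse_def hom_def by auto
    show "DM (t x x) = UU" "CD (t x x) = A x x"
      "m x x x \<bullet> ((idm (A x x) \<otimes> t x x) \<bullet> rui C (A x x)) = t x x \<bullet> ep x x"
      using li unfolding left_integral_family_def hom_def by auto
  qed
  have evh: "DM (ev C (A x x) UU) = ih C (A x x) UU \<odot> A x x" "CD (ev C (A x x) UU) = UU"
    using a(2) unfolding closed_def hom_def by auto
  show ?thesis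
  proof (intro conjI allI impI)
    fix f g assume h: "hom C f (A x x) (U C) \<and> hom C g (A x x) (U C) \<and>
            cp C (ru C (A x x)) (cp C (tm C (ident C (A x x)) f) (cp C (dl x x) (t x x))) = j x \<and>
            cp C (lu C (A x x)) (cp C (tm C g (ident C (A x x))) (cp C (dl x x) (t x x))) = j x"
    show "g = cp C f (si x x)"
      by (rule part1) (use h in \<open>auto simp: hom_def\<close>)
  next
    fix pb qb assume h: "right_inverse C pb (pmap C A dl t x x) \<and> right_inverse C qb (qmap C A dl t x x)"
    show "cp C (ev C (A x x) (U C))
                (cp C (tm C pb (ident C (A x x)))
                  (cp C (tm C (j x) (ident C (A x x))) (lui C (A x x))))
            = cp C (ev C (A x x) (U C))
                (cp C (br C (A x x) (dual C (A x x)))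
                  (cp C (tm C (ident C (A x x)) qb)
                    (cp C (tm C (ident C (A x x)) (j x))
                      (cp C (rui C (A x x)) (si x x)))))"
      unfolding dual_def
      by (rule part2) (use h evh in \<open>auto simp: right_inverse_def pmap_def qmap_def dual_def hom_def Let_def\<close>)
  qed
qed

end
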